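(* In the setting below, let $L_{\Sigma_1,\alpha_1}$ be any finite-dimensional Krein subspace of $L_{\Sigma_1}$. Then there exists a finite-dimensional Krein subspace $L_{\Sigma,\alpha}$ of $L_\Sigma$ such that for every $\phi\in L_{\Sigma_1,\alpha_1}$ there are $\phi',\phi''\in L_{\Sigma,\alpha}$ with $$u_M(\phi,\phi',\phi'')=(u_{M_1}(\phi),\phi'',\phi').$$
   Context: A classical free fermionic field theory on a spacetime system is given as follows. To each (oriented) hypersurface $\Sigma$ is associated a real separable Krein space $(L_\Sigma,g_\Sigma)$ (a real inner product space with an orthogonal decomposition $L_\Sigma=L_{\Sigma,+}\oplus L_{\Sigma,-}$, $g_\Sigma$ positive definite and complete on $L_{\Sigma,+}$, negative definite and complete on $L_{\Sigma,-}$). A finite-dimensional Krein subspace is a finite-dimensional subspace on which $g_\Sigma$ is non-degenerate. For $\overline{\Sigma}$, $L_{\overline\Sigma}$ is identified with $L_\Sigma$ as a vector space with $g_{\overline\Sigma}=-g_\Sigma$. If $\Sigma$ decomposes as $\Sigma_1\cup\cdots\cup\Sigma_n$, then $L_\Sigma\cong L_{\Sigma_1}\oplus\cdots\oplus L_{\Sigma_n}$ isometrically. To each region $N$ is associated a real vector space $L_N$ and a linear map $r_N:L_N\to L_{\partial N}$ whose image $L_{\tilde N}$ is a hypermaximal neutral subspace of $L_{\partial N}$ ($g_{\partial N}$ vanishes on it and it equals its own orthogonal complement). For a region $N$, $u_N:L_{\partial N}\to L_{\partial N}$ is the unique linear map with $u_N^2=\mathrm{id}$, mapping $L_{\partial N,\pm}$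 onto $L_{\partial N,\mp}$ with $g_{\partial N}(u_Nx,u_Ny)=-g_{\partial N}(x,y)$, and equal to the identity on $L_{\tilde N}$. Setting: $M$ is a region with boundary decomposing as a disjoint union $\partial M=\Sigma_1\cup\Sigma\cup\overline{\Sigma'}$, $\Sigma'$ a copy of $\Sigma$, and $M_1$ is the region obtained by gluing $M$ to itself along $\Sigma,\overline{\Sigma'}$ (so $\partial M_1=\Sigma_1$). Elements of $L_{\partial M}=L_{\Sigma_1}\oplus L_\Sigma\oplus L_{\overline{\Sigma'}}$ are written as triples, with $L_{\overline{\Sigma'}}$ identified with $L_\Sigma$. Gluing axiom: there is an injective linear map $r_{M;\Sigma,\overline{\Sigma'}}:L_{M_1}\to L_M$ whose image is exactly the set of $x\in L_M$ for which the $L_\Sigma$- and $L_{\overline{\Sigma'}}$-components of $r_M(x)$ coincide, and such that $r_{M_1}$ equals $r_M\circ r_{M;\Sigma,\overline{\Sigma'}}$ followed by the projection onto $L_{\Sigma_1}$. *)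

theory Defs
  imports "HOL-Analysis.Analysis"
begin

definition form_complete_on :: "('a::real_vector \<Rightarrow> 'a \<Rightarrow> real) \<Rightarrow> 'a set \<Rightarrow> bool" where
  "form_complete_on h S \<longleftrightarrow>
     (\<forall>s::nat \<Rightarrow> 'a. (\<forall>n. s n \<in> S) \<and>
        (\<forall>e>0. \<exists>K. \<forall>m n. K \<le> m \<longrightarrow> K \<le> n \<longrightarrow> sqrt (h (s m - s n) (s m - s n)) < e)
        \<longrightarrow> (\<exists>x\<in>S. \<forall>e>0. \<exists>K. \<forall>n. K \<le> n \<longrightarrow> sqrt (h (s n - x) (s n - x)) < e))"

definition form_separable_on :: "('a::real_vector \<Rightarrow> 'a \<Rightarrow> real) \<Rightarrow> 'a set \<Rightarrow> bool" where
  "form_separable_on h S \<longleftrightarrow>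
     (\<exists>D. countable D \<and> D \<subseteq> S \<and>
        (\<forall>x\<in>S. \<forall>e>0. \<exists>d\<in>D. sqrt (h (x - d) (x - d)) < e))"

definition krein_space :: "('a::real_vector \<Rightarrow> 'a \<Rightarrow> real) \<Rightarrow> 'a set \<Rightarrow> 'a set \<Rightarrow> bool" where
  "krein_space g P N \<longleftrightarrow>
     bilinear g \<and> (\<forall>x y. g x y = g y x) \<and>
     subspace P \<and> subspace N \<and> P \<inter> N = {0} \<and> (\<forall>x. \<exists>p\<in>P. \<exists>n\<in>N. x = p + n) \<and>
     (\<forall>p\<in>P. \<forall>n\<in>N. g p n = 0) \<and>
     (\<forall>x\<in>P. x \<noteq> 0 \<longrightarrow> g x x > 0) \<and> (\<forall>x\<in>N. x \<noteq> 0 \<longrightarrow> g x x < 0) \<and>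
     form_complete_on g P \<and> form_complete_on (\<lambda>x y. - g x y) N \<and>
     form_separable_on g P \<and> form_separable_on (\<lambda>x y. - g x y) N"

definition fd_krein_subspace :: "('a::real_vector \<Rightarrow> 'a \<Rightarrow> real) \<Rightarrow> 'a set \<Rightarrow> bool" where
  "fd_krein_subspace g S \<longleftrightarrow>
     subspace S \<and> (\<exists>B. finite B \<and> S = span B) \<and>
     (\<forall>x\<in>S. (\<forall>y\<in>S. g x y = 0) \<longrightarrow> x = 0)"

definition hypermaximal_neutral :: "('a::real_vector \<Rightarrow> 'a \<Rightarrow> real) \<Rightarrow> 'a set \<Rightarrow> bool" where
  "hypermaximal_neutral g L \<longleftrightarrow>
     (\<forall>x\<in>L. \<forall>y\<in>L. g x y = 0) \<and> {y. \<forall>x\<in>L. g x y = 0} = L"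

text \<open>The map u_N of a region N with boundary Krein space (g,P,N) and image L of r_N.\<close>
definition is_u_map :: "('a::real_vector \<Rightarrow> 'a \<Rightarrow> real) \<Rightarrow> 'a set \<Rightarrow> 'a set \<Rightarrow> 'a set \<Rightarrow> ('a \<Rightarrow> 'a) \<Rightarrow> bool" where
  "is_u_map g P N L u \<longleftrightarrow>
     linear u \<and> (\<forall>x. u (u x) = x) \<and> u ` P = N \<and> u ` N = P \<and>
     (\<forall>x y. g (u x) (u y) = - g x y) \<and> (\<forall>x\<in>L. u x = x)"

text \<open>Boundary form of M: L_Sigma1 (+) L_Sigma (+) L_(Sigma' bar), the last with form -g.\<close>
definition bdry_form :: "('a::real_vector \<Rightarrow> 'a \<Rightarrow> real) \<Rightarrow> ('b::real_vector \<Rightarrow> 'b \<Rightarrow> real)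
    \<Rightarrow> 'a \<times> 'b \<times> 'b \<Rightarrow> 'a \<times> 'b \<times> 'b \<Rightarrow> real" where
  "bdry_form g1 g x y = g1 (fst x) (fst y) + g (fst (snd x)) (fst (snd y)) - g (snd (snd x)) (snd (snd y))"

end

theory Submission
  imports Defs
begin

lemma decomp_unique:
  assumes "subspace P" "subspace N" "P \<inter> N = {0}" "p \<in> P" "n \<in> N" "p' \<in> P" "n' \<in> N"
    "p + n = p' + n'"
  shows "p = p' \<and> n = n'"
proof -
  have "p - p' = n' - n" using assms(8) by (metis add_diff_cancel_left add_diff_cancel_right diff_diff_eq2 add.commute)
  moreover have "p - p' \<in> P" using assms(1,4,6) by (rule subspace_diff)
  moreover have "n' - n \<in> N" using assms(2,7,5) by (rule subspace_diff)
  ultimately have "p - p' \<in> P \<inter> N" by simp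
  hence "p - p' = 0" using assms(3) by blast
  thus ?thesis using assms(8) by simp
qed
lemma exJ:
  fixes P N :: "'c::real_vector set"
  assumes "subspace P" "subspace N" "P \<inter> N = {0}" "\<forall>x. \<exists>p\<in>P. \<exists>n\<in>N. x = p + n"
  shows "\<exists>J. \<forall>p\<in>P. \<forall>n\<in>N. J (p + n) = p - n"
proof -
  from assms(4) obtain pp where pp: "\<forall>x. pp x \<in> P \<and> (\<exists>n\<in>N. x = pp x + n)" by metis
  have "\<forall>p\<in>P. \<forall>n\<in>N. (\<lambda>x. pp x - (x - pp x)) (p + n) = p - n"
  proof (intro ballI)
    fix p n assume p: "p \<in> P" and n: "n \<in> N"
    from pp obtain n' where n': "n' \<in> N" "p + n = pp (p+n) + n'" by metis
    have "pp (p+n) = p" using decomp_unique[OF assms(1-3) p n _ n'(1) n'(2)] pp by auto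
    thus "(\<lambda>x. pp x - (x - pp x)) (p + n) = p - n" by simp
  qed
  thus ?thesis by (intro exI[of _ "\<lambda>x. pp x - (x - pp x)"])
qed

lemma J_neg:
  assumes D: "\<forall>x. \<exists>p\<in>P. \<exists>n\<in>N. x = p + n" and HJ: "\<forall>p\<in>P. \<forall>n\<in>N. J (p + n) = p - n"
    and "subspace P" "subspace N"
  shows "J (- x) = - J x"
proof -
  obtain p n where pn: "p \<in> P" "n \<in> N" "x = p + n" using D by blast
  have "-p \<in> P" "-n \<in> N" using pn assms by (auto simp: subspace_neg)
  hence "J (-p + -n) = -p - -n" using HJ by blast
  moreover have "- x = -p + -n" using pn by simp
  ultimately show ?thesis using HJ pn by simp
qed

lemma J_inv:
  assumes D: "\<forall>x. \<exists>p\<in>P. \<exists>n\<in>N. x = p + n" and HJ: "\<forall>p\<in>P. \<forall>n\<in>N. J (p + n) = p - n"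
    and "subspace P" "subspace N"
  shows "J (J x) = x"
proof -
  obtain p n where pn: "p \<in> P" "n \<in> N" "x = p + n" using D by blast
  have "-n \<in> N" using pn assms by (auto simp: subspace_neg)
  hence "J (p + -n) = p - -n" using HJ pn by blast
  moreover have "J x = p + - n" using pn HJ by simp
  ultimately show ?thesis using pn by simp
qed

lemma J_anticomm:
  assumes D: "\<forall>x. \<exists>p\<in>P. \<exists>n\<in>N. x = p + n" and HJ: "\<forall>p\<in>P. \<forall>n\<in>N. J (p + n) = p - n"
    and lu: "linear u" and uP: "u ` P \<subseteq> N" and uN: "u ` N \<subseteq> P"
  shows "J (u x) = - u (J x)"
proof -
  obtain p n where pn: "p \<in> P" "n \<in> N" "x = p + n" using D by blast
  have "u x = u n + u p" using pn lu by (simp add: linear_add add.commute)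
  moreover have "u n \<in> P" "u p \<in> N" using pn uP uN by auto
  ultimately have "J (u x) = u n - u p" using HJ by simp
  moreover have "u (J x) = u p - u n" using pn HJ lu by (simp add: linear_diff)
  ultimately show ?thesis by simp
qed

lemma fix_in:
  assumes "is_u_map g P N L u" "hypermaximal_neutral g L" "u x = x"
  shows "x \<in> L"
proof -
  have "\<forall>l\<in>L. g l x = 0"
  proof
    fix l assume "l \<in> L"
    hence "u l = l" using assms(1) unfolding is_u_map_def by blast
    hence "g l x = - g l x" using assms(1,3) unfolding is_u_map_def by metis
    thus "g l x = 0" by simp
  qed
  thus ?thesis using assms(2) unfolding hypermaximal_neutral_def by blast
qed

lemma exists_sol:
  fixes g1 :: "'a::real_vector \<Rightarrow> 'a \<Rightarrow> real" and P1 N1 :: "'a set"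
    and g :: "'b::real_vector \<Rightarrow> 'b \<Rightarrow> real" and P N :: "'b set"
    and rM :: "'m::real_vector \<Rightarrow> 'a \<times> 'b \<times> 'b"
    and rM1 :: "'n::real_vector \<Rightarrow> 'a"
    and rglue :: "'n \<Rightarrow> 'm"
    and uM :: "'a \<times> 'b \<times> 'b \<Rightarrow> 'a \<times> 'b \<times> 'b"
    and uM1 :: "'a \<Rightarrow> 'a" and \<phi> :: 'a
  assumes K1: "krein_space g1 P1 N1"
    and K: "krein_space g P N"
    and rM_hyp: "hypermaximal_neutral (bdry_form g1 g) (range rM)"
    and rM1_hyp: "hypermaximal_neutral g1 (range rM1)"
    and glue_range: "range rglue = {x. fst (snd (rM x)) = snd (snd (rM x))}"
    and glue_comp: "\<forall>y. rM1 y = fst (rM (rglue y))"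
    and uM_def: "is_u_map (bdry_form g1 g) (P1 \<times> P \<times> N) (N1 \<times> N \<times> P) (range rM) uM"
    and uM1_def: "is_u_map g1 P1 N1 (range rM1) uM1"
  shows "\<exists>\<phi>' \<phi>''. uM (\<phi>, \<phi>', \<phi>'') = (uM1 \<phi>, \<phi>'', \<phi>')"
proof -
  have sP1: "subspace P1" and sN1: "subspace N1" and i1: "P1 \<inter> N1 = {0}"
    and D1: "\<forall>x. \<exists>p\<in>P1. \<exists>n\<in>N1. x = p + n" using K1 unfolding krein_space_def by auto
  have sP: "subspace P" and sN: "subspace N" and i0: "P \<inter> N = {0}"
    and D0: "\<forall>x. \<exists>p\<in>P. \<exists>n\<in>N. x = p + n" using K unfolding krein_space_def by auto
  have lu1: "linear uM1" and inv1: "\<forall>x. uM1 (uM1 x) = x" and u1P: "uM1 ` P1 \<subseteq> N1"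
    and u1N: "uM1 ` N1 \<subseteq> P1" using uM1_def unfolding is_u_map_def by auto
  have lu: "linear uM" and uP: "uM ` (P1 \<times> P \<times> N) \<subseteq> (N1 \<times> N \<times> P)"
    and uN: "uM ` (N1 \<times> N \<times> P) \<subseteq> (P1 \<times> P \<times> N)" and ufix: "\<forall>x\<in>range rM. uM x = x"
    using uM_def unfolding is_u_map_def by auto
  obtain J1 where HJ1: "\<forall>p\<in>P1. \<forall>n\<in>N1. J1 (p+n) = p - n" using exJ[OF sP1 sN1 i1 D1] by blast
  obtain J where HJ: "\<forall>p\<in>P. \<forall>n\<in>N. J (p+n) = p - n" using exJ[OF sP sN i0 D0] by blast
  define JM where "JM = (\<lambda>(a::'a,b::'b,c::'b). (J1 a, J b, - J c))"
  have HJM: "\<forall>q\<in>P1 \<times> P \<times> N. \<forall>r\<in>N1 \<times> N \<times> P. JM (q + r) = q - r"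
  proof (intro ballI)
    fix q r assume q: "q \<in> P1 \<times> P \<times> N" and r: "r \<in> N1 \<times> N \<times> P"
    obtain p1 p n' where qe: "q = (p1, p, n')" by (cases q) auto
    obtain n1 n p' where re: "r = (n1, n, p')" by (cases r) auto
    have m: "p1 \<in> P1" "p \<in> P" "n' \<in> N" "n1 \<in> N1" "n \<in> N" "p' \<in> P" using q r qe re by auto
    have "J (p' + n') = p' - n'" using HJ m by blast
    hence "J (n' + p') = p' - n'" by (simp add: add.commute)
    thus "JM (q + r) = q - r" using qe re HJ1 HJ m unfolding JM_def by simp
  qed
  have DM: "\<forall>x. \<exists>q\<in>P1 \<times> P \<times> N. \<exists>r\<in>N1 \<times> N \<times> P. x = q + r"
  proof
    fix x :: "'a \<times> 'b \<times> 'b"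
    obtain a b c where xe: "x = (a, b, c)" by (cases x) auto
    obtain p1 n1 where 1: "p1 \<in> P1" "n1 \<in> N1" "a = p1 + n1" using D1 by blast
    obtain p n where 2: "p \<in> P" "n \<in> N" "b = p + n" using D0 by blast
    obtain p' n' where 3: "p' \<in> P" "n' \<in> N" "c = p' + n'" using D0 by blast
    have "x = (p1, p, n') + (n1, n, p')" using xe 1 2 3 by (simp add: add.commute)
    thus "\<exists>q\<in>P1 \<times> P \<times> N. \<exists>r\<in>N1 \<times> N \<times> P. x = q + r" using 1 2 3 by blast
  qed
  have JM_anti: "\<And>x. JM (uM x) = - uM (JM x)"
    by (rule J_anticomm[OF DM HJM lu uP uN])
  define l :: 'a where "l = (1/2) *\<^sub>R (\<phi> + uM1 \<phi>)"
  define w :: 'a where "w = (1/2) *\<^sub>R (\<phi> - uM1 \<phi>)"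
  have phi: "\<phi> = l + w" unfolding l_def w_def by (simp add: scaleR_add_right scaleR_diff_right flip: scaleR_add_left)
  have u1phi: "uM1 \<phi> = l - w" unfolding l_def w_def by (simp add: scaleR_add_right scaleR_diff_right flip: scaleR_add_left)
  have ul: "uM1 l = l" unfolding l_def using lu1 inv1 by (simp add: linear_scale linear_add add.commute)
  have uw: "uM1 w = - w" unfolding w_def using lu1 inv1 by (simp add: linear_scale linear_diff algebra_simps)
  have "l \<in> range rM1" by (rule fix_in[OF uM1_def rM1_hyp ul])
  then obtain y where ye: "l = rM1 y" by blast
  define v where "v = rM (rglue y)"
  have "rglue y \<in> range rglue" by blast
  hence v23: "fst (snd v) = snd (snd v)" using glue_range unfolding v_def by auto
  have v1: "fst v = l" using glue_comp ye unfolding v_def by simp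
  define a where "a = fst (snd v)"
  have ve: "v = (l, a, a)" using v1 v23 unfolding a_def by (simp add: prod_eq_iff)
  have uv: "uM v = v" using ufix unfolding v_def by blast
  define m where "m = J1 w"
  have "J1 (uM1 w) = - uM1 (J1 w)" by (rule J_anticomm[OF D1 HJ1 lu1 u1P u1N])
  moreover have "J1 (uM1 w) = - J1 w" using uw J_neg[OF D1 HJ1 sP1 sN1] by simp
  ultimately have um: "uM1 m = m" unfolding m_def by simp
  have "m \<in> range rM1" by (rule fix_in[OF uM1_def rM1_hyp um])
  then obtain z where ze: "m = rM1 z" by blast
  define v' where "v' = rM (rglue z)"
  have "rglue z \<in> range rglue" by blast
  hence v23': "fst (snd v') = snd (snd v')" using glue_range unfolding v'_def by auto
  have v1': "fst v' = m" using glue_comp ze unfolding v'_def by simp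
  define c where "c = fst (snd v')"
  have ve': "v' = (m, c, c)" using v1' v23' unfolding c_def by (simp add: prod_eq_iff)
  have uv': "uM v' = v'" using ufix unfolding v'_def by blast
  have Jm: "J1 m = w" unfolding m_def by (rule J_inv[OF D1 HJ1 sP1 sN1])
  have JMv': "JM v' = (w, J c, - J c)" unfolding JM_def ve' using Jm by simp
  have "JM (uM v') = - uM (JM v')" by (rule JM_anti)
  hence "(w, J c, - J c) = - uM (w, J c, - J c)" using uv' JMv' by simp
  hence uJ: "uM (w, J c, - J c) = - (w, J c, - J c)" by (metis minus_minus)
  have "(\<phi>, a + J c, a - J c) = v + (w, J c, - J c)" using ve phi by simp
  hence "uM (\<phi>, a + J c, a - J c) = uM v + uM (w, J c, - J c)" using lu by (simp add: linear_add)
  also have "\<dots> = (uM1 \<phi>, a - J c, a + J c)" using uv uJ ve u1phi by simp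
  finally show ?thesis by blast
qed

theorem mainTheorem2:
  fixes g1 :: "'a::real_vector \<Rightarrow> 'a \<Rightarrow> real" and P1 N1 :: "'a set"
    and g :: "'b::real_vector \<Rightarrow> 'b \<Rightarrow> real" and P N :: "'b set"
    and rM :: "'m::real_vector \<Rightarrow> 'a \<times> 'b \<times> 'b"
    and rM1 :: "'n::real_vector \<Rightarrow> 'a"
    and rglue :: "'n \<Rightarrow> 'm"
    and uM :: "'a \<times> 'b \<times> 'b \<Rightarrow> 'a \<times> 'b \<times> 'b"
    and uM1 :: "'a \<Rightarrow> 'a"
    and S1 :: "'a set"
  assumes K1: "krein_space g1 P1 N1"
    and K: "krein_space g P N"
    and rM_lin: "linear rM"
    and rM_hyp: "hypermaximal_neutral (bdry_form g1 g) (range rM)"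
    and rM1_lin: "linear rM1"
    and rM1_hyp: "hypermaximal_neutral g1 (range rM1)"
    and glue_lin: "linear rglue"
    and glue_inj: "inj rglue"
    and glue_range: "range rglue = {x. fst (snd (rM x)) = snd (snd (rM x))}"
    and glue_comp: "\<forall>y. rM1 y = fst (rM (rglue y))"
    and uM_def: "is_u_map (bdry_form g1 g) (P1 \<times> P \<times> N) (N1 \<times> N \<times> P) (range rM) uM"
    and uM1_def: "is_u_map g1 P1 N1 (range rM1) uM1"
    and S1: "fd_krein_subspace g1 S1"
  shows "\<exists>S. fd_krein_subspace g S \<and>
           (\<forall>\<phi>\<in>S1. \<exists>\<phi>'\<in>S. \<exists>\<phi>''\<in>S. uM (\<phi>, \<phi>', \<phi>'') = (uM1 \<phi>, \<phi>'', \<phi>'))"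
proof -
  have "\<forall>\<phi>. \<exists>\<phi>' \<phi>''. uM (\<phi>, \<phi>', \<phi>'') = (uM1 \<phi>, \<phi>'', \<phi>')"
    using exists_sol[OF K1 K rM_hyp rM1_hyp glue_range glue_comp uM_def uM1_def] by blast
  then obtain f1 f2 where f: "\<forall>\<phi>. uM (\<phi>, f1 \<phi>, f2 \<phi>) = (uM1 \<phi>, f2 \<phi>, f1 \<phi>)" by metis
  obtain B where B: "finite B" "S1 = span B" using S1 unfolding fd_krein_subspace_def by blast
  define C where "C = f1 ` B \<union> f2 ` B"
  have lu: "linear uM" using uM_def unfolding is_u_map_def by auto
  have lu1: "linear uM1" using uM1_def unfolding is_u_map_def by auto
  define T where "T = {\<phi>. \<exists>\<phi>'\<in>span C. \<exists>\<phi>''\<in>span C. uM (\<phi>, \<phi>', \<phi>'') = (uM1 \<phi>, \<phi>'', \<phi>')}"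
  have sT: "subspace T" unfolding subspace_def
  proof (intro conjI ballI allI)
    have "uM (0, 0, 0) = (uM1 0, 0, 0)"
      using linear_0[OF lu] linear_0[OF lu1] by (simp add: zero_prod_def)
    thus "0 \<in> T" unfolding T_def by (auto intro: span_zero)
  next
    fix x y assume "x \<in> T" "y \<in> T"
    then obtain x' x'' y' y'' where xy: "x' \<in> span C" "x'' \<in> span C" "y' \<in> span C" "y'' \<in> span C"
      "uM (x, x', x'') = (uM1 x, x'', x')" "uM (y, y', y'') = (uM1 y, y'', y')"
      unfolding T_def by blast
    have e: "uM ((x, x', x'') + (y, y', y'')) = uM (x, x', x'') + uM (y, y', y'')"
      by (rule linear_add[OF lu])
    have "uM1 (x + y) = uM1 x + uM1 y" by (rule linear_add[OF lu1])
    hence "uM ((x, x', x'') + (y, y', y'')) = (uM1 (x + y), x'' + y'', x' + y')"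
      using e xy(5,6) by simp
    hence "uM (x + y, x' + y', x'' + y'') = (uM1 (x + y), x'' + y'', x' + y')" by simp
    thus "x + y \<in> T" unfolding T_def using xy by (auto intro: span_add)
  next
    fix r :: real and x assume "x \<in> T"
    then obtain x' x'' where xy: "x' \<in> span C" "x'' \<in> span C"
      "uM (x, x', x'') = (uM1 x, x'', x')" unfolding T_def by blast
    have e: "uM (r *\<^sub>R (x, x', x'')) = r *\<^sub>R uM (x, x', x'')"
      by (rule linear_scale[OF lu])
    have "uM1 (r *\<^sub>R x) = r *\<^sub>R uM1 x" by (rule linear_scale[OF lu1])
    hence "uM (r *\<^sub>R (x, x', x'')) = (uM1 (r *\<^sub>R x), r *\<^sub>R x'', r *\<^sub>R x')"
      using e xy(3) by simp
    hence "uM (r *\<^sub>R x, r *\<^sub>R x', r *\<^sub>R x'') = (uM1 (r *\<^sub>R x), r *\<^sub>R x'', r *\<^sub>R x')" by simp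
    thus "r *\<^sub>R x \<in> T" unfolding T_def using xy by (auto intro: span_scale)
  qed
  have "B \<subseteq> T"
  proof
    fix b assume "b \<in> B"
    hence "f1 b \<in> span C" "f2 b \<in> span C" unfolding C_def by (auto intro: span_base)
    thus "b \<in> T" unfolding T_def using f by blast
  qed
  hence S1T: "S1 \<subseteq> T" using B(2) span_minimal[OF _ sT] by blast
  have sP: "subspace P" and sN: "subspace N" and D0: "\<forall>x. \<exists>p\<in>P. \<exists>n\<in>N. x = p + n"
    and bil: "bilinear g" and sym: "\<forall>x y. g x y = g y x" and orth: "\<forall>p\<in>P. \<forall>n\<in>N. g p n = 0"
    and pos: "\<forall>x\<in>P. x \<noteq> 0 \<longrightarrow> g x x > 0" and neg: "\<forall>x\<in>N. x \<noteq> 0 \<longrightarrow> g x x < 0"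
    using K unfolding krein_space_def by auto
  obtain pp nn where ppnn: "\<forall>x. pp x \<in> P \<and> nn x \<in> N \<and> x = pp x + nn x" using D0 by metis
  define S where "S = span (pp ` C \<union> nn ` C)"
  have CS: "span C \<subseteq> S"
  proof (rule span_minimal)
    show "subspace S" unfolding S_def by (rule subspace_span)
    show "C \<subseteq> S"
    proof
      fix c assume "c \<in> C"
      hence "pp c \<in> S" "nn c \<in> S" unfolding S_def by (auto intro: span_base)
      hence "pp c + nn c \<in> S" unfolding S_def by (rule span_add)
      thus "c \<in> S" using ppnn by metis
    qed
  qed
  have fdS: "fd_krein_subspace g S"
    unfolding fd_krein_subspace_def
  proof (intro conjI ballI impI)
    show "subspace S" unfolding S_def by (rule subspace_span)
    have "finite C" unfolding C_def using B(1) by simp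
    hence "finite (pp ` C \<union> nn ` C)" by simp
    thus "\<exists>B. finite B \<and> S = span B" unfolding S_def by (intro exI[of _ "pp ` C \<union> nn ` C"]) simp
  next
    fix x assume xS: "x \<in> S" and o: "\<forall>y\<in>S. g x y = 0"
    have "pp ` C \<subseteq> P" "nn ` C \<subseteq> N" using ppnn by auto
    hence sPc: "span (pp ` C) \<subseteq> P" and sNc: "span (nn ` C) \<subseteq> N"
      using span_minimal[OF _ sP] span_minimal[OF _ sN] by blast+
    have "x \<in> {x + y | x y. x \<in> span (pp ` C) \<and> y \<in> span (nn ` C)}"
      using xS unfolding S_def span_Un .
    then obtain a b where ab: "a \<in> span (pp ` C)" "b \<in> span (nn ` C)" "x = a + b"
      by blast
    have "span (pp ` C) \<subseteq> S" "span (nn ` C) \<subseteq> S" unfolding S_def by (simp_all add: span_mono)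
    hence aS: "a \<in> S" "b \<in> S" using ab by blast+
    have aP: "a \<in> P" and bN: "b \<in> N" using ab sPc sNc by auto
    have gab1: "g a b = 0" using orth aP bN by blast
    hence gab: "g a b = 0" "g b a = 0" using sym by metis+
    have "g x a = g a a + g b a" using ab bilinear_ladd[OF bil] by simp
    hence "g a a = 0" using o aS gab by simp
    hence a0: "a = 0" using pos aP by (metis less_irrefl)
    have "g x b = g a b + g b b" using ab bilinear_ladd[OF bil] by simp
    hence "g b b = 0" using o aS gab by simp
    hence b0: "b = 0" using neg bN by (metis less_irrefl)
    show "x = 0" using ab a0 b0 by simp
  qed
  show ?thesis
  proof (intro exI conjI ballI)
    show "fd_krein_subspace g S" by (rule fdS)
  next
    fix \<phi> assume "\<phi> \<in> S1"
    hence "\<phi> \<in> T" using S1T by blast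
    then obtain a b where "a \<in> span C" "b \<in> span C" "uM (\<phi>, a, b) = (uM1 \<phi>, b, a)"
      unfolding T_def by blast
    moreover have "a \<in> S" "b \<in> S" using CS calculation(1,2) by blast+
    ultimately show "\<exists>\<phi>'\<in>S. \<exists>\<phi>''\<in>S. uM (\<phi>, \<phi>', \<phi>'') = (uM1 \<phi>, \<phi>'', \<phi>')"
      by blast
  qed
qed

end
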